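(* Let $R$ be a ring and let $(f_k)_{k\in\mathbb{Z}_{\geq 0}}$ be a sequence of elements of $R$ with $f_0=1$. For $s\in\mathbb{Z}_{\geq 0}$ and $0\le k\le s$, let $\nu_{s,k}\in\mathbb{Z}$ be the coefficient of $z^k$ in the Laurent polynomial $(z+z^{-1})^s\in\mathbb{Z}[z^{\pm1}]$. Suppose that for every $s\in\mathbb{Z}_{\geq0}$ we have $f_1^s=\sum_{k=0}^s \nu_{s,k}f_k$. Then $f_s=T_s(f_1)$ for all $s\geq 1$.
   Context: The Chebyshev polynomials of the first kind $T_k(z)\in\mathbb{Z}[z]$, $k\ge 0$, are defined by $T_0(z)=2$, $T_1(z)=z$, and $T_{k+1}(z)=zT_k(z)-T_{k-1}(z)$; equivalently $T_k(z+z^{-1})=z^k+z^{-k}$. *)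

theory Defs
  imports "HOL-Computational_Algebra.Formal_Laurent_Series"
begin

fun cheb :: "nat \<Rightarrow> 'a::ring_1 \<Rightarrow> 'a" where
  "cheb 0 x = 2"
| "cheb (Suc 0) x = x"
| "cheb (Suc (Suc k)) x = x * cheb (Suc k) x - cheb k x"

definition nu :: "nat \<Rightarrow> nat \<Rightarrow> int" where
  "nu s k = fls_nth ((fls_X + fls_X_inv :: int fls) ^ s) (int k)"

end

theory Submission
  imports Defs
begin

definition NN :: "nat \<Rightarrow> int \<Rightarrow> int" where
  "NN s j = fls_nth ((fls_X + fls_X_inv :: int fls) ^ s) j"

lemma NN_0: "NN 0 j = (if j = 0 then 1 else 0)"
  by (simp add: NN_def)

lemma NN_Suc: "NN (Suc s) j = NN s (j - 1) + NN s (j + 1)"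
  by (simp add: NN_def distrib_right fls_X_times_conv_shift fls_X_inv_times_conv_shift)

lemma NN_zero: "\<bar>j\<bar> > int s \<Longrightarrow> NN s j = 0"
proof (induction s arbitrary: j)
  case 0 then show ?case by (simp add: NN_0)
next
  case (Suc s)
  have "NN s (j - 1) = 0" by (rule Suc.IH) (use Suc.prems in linarith)
  moreover have "NN s (j + 1) = 0" by (rule Suc.IH) (use Suc.prems in linarith)
  ultimately show ?case by (simp only: NN_Suc add_0)
qed

lemma NN_top: "NN s (int s) = 1"
proof (induction s)
  case 0 then show ?case by (simp add: NN_0)
next
  case (Suc s)
  have "NN s (int (Suc s) + 1) = 0" by (rule NN_zero) simp
  moreover have "int (Suc s) - 1 = int s" by simp
  ultimately show ?case using Suc.IH by (simp only: NN_Suc add_0_right)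
qed

lemma NN_sym: "NN s (- j) = NN s j"
proof (induction s arbitrary: j)
  case 0 then show ?case by (simp add: NN_0)
next
  case (Suc s)
  have e1: "- j - 1 = - (j + 1)" by simp
  have e2: "- j + 1 = - (j - 1)" by simp
  have "NN s (- j - 1) = NN s (j + 1)" unfolding e1 by (rule Suc.IH)
  moreover have "NN s (- j + 1) = NN s (j - 1)" unfolding e2 by (rule Suc.IH)
  ultimately show ?case by (simp only: NN_Suc add.commute)
qed

lemma nu_NN: "nu s k = NN s (int k)"
  by (simp add: nu_def NN_def)

lemma nu_Suc_Suc: "nu (Suc s) (Suc k) = nu s k + nu s (k + 2)"
  by (simp add: nu_NN NN_Suc add.commute)

lemma nu_Suc_0: "nu (Suc s) 0 = 2 * nu s 1"
  using NN_sym[of s 1] by (simp add: nu_NN NN_Suc)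

lemma nu_zero: "k > s \<Longrightarrow> nu s k = 0"
  by (simp add: nu_NN NN_zero)

lemma nu_top: "nu s s = 1"
  by (simp add: nu_NN NN_top)

definition gg :: "'a::ring_1 \<Rightarrow> nat \<Rightarrow> 'a" where
  "gg x k = (if k = 0 then 1 else cheb k x)"

lemma gg_rec0: "x * gg x 0 = gg x 1"
  by (simp add: gg_def)

lemma gg_rec: "x * gg x (Suc k) = gg x (Suc (Suc k)) + (if k = 0 then 2 else 1) * gg x k"
  by (cases k) (auto simp: gg_def)

lemma key_step:
  fixes x :: "'a::ring_1"
  assumes M: "M \<ge> s + 2"
  shows "x * (\<Sum>k<M. of_int (nu s k) * gg x k) = (\<Sum>k<M. of_int (nu (Suc s) k) * gg x k)"
proof -
  define a where "a k = (of_int (nu s k) :: 'a)" for k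
  define M1 where "M1 = M - 2"
  have M1: "M = Suc (Suc M1)" using M unfolding M1_def by arith
  have aM: "a k = 0" if "k \<ge> M1 + 1" for k
    using M M1 that by (simp add: a_def nu_zero)
  have comm: "x * a k = a k * x" for k
    by (simp add: a_def mult_of_int_commute)
  have L: "x * (\<Sum>k<M. a k * gg x k) = (\<Sum>k<M. a k * (x * gg x k))"
    by (simp add: sum_distrib_left mult.assoc[symmetric] comm)
  define b where "b k = (of_int (nu (Suc s) k) :: 'a)" for k
  have b0: "b 0 = 2 * a 1" by (simp add: a_def b_def nu_Suc_0)
  have bS: "b (Suc k) = a k + a (k + 2)" for k by (simp add: a_def b_def nu_Suc_Suc)
  have X1: "a 1 * gg x 2 + (\<Sum>k<M1. a (k+2) * gg x (k+3)) = (\<Sum>k<M1. a (k+1) * gg x (k+2))"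
  proof -
    have "(\<Sum>k<Suc M1. a (k+1) * gg x (k+2)) = a 1 * gg x 2 + (\<Sum>k<M1. a (k+2) * gg x (k+3))"
      unfolding sum.lessThan_Suc_shift by (simp add: numeral_2_eq_2 numeral_3_eq_3)
    moreover have "(\<Sum>k<Suc M1. a (k+1) * gg x (k+2)) = (\<Sum>k<M1. a (k+1) * gg x (k+2))"
      using aM[of "M1+1"] by simp
    ultimately show ?thesis by simp
  qed
  have X2: "(\<Sum>k<M1. a (k+2) * gg x (k+1)) = a 2 * gg x 1 + (\<Sum>k<M1. a (k+3) * gg x (k+2))"
  proof -
    have "(\<Sum>k<Suc M1. a (k+2) * gg x (k+1)) = a 2 * gg x 1 + (\<Sum>k<M1. a (k+3) * gg x (k+2))"
      unfolding sum.lessThan_Suc_shift by (simp add: numeral_2_eq_2 numeral_3_eq_3)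
    moreover have "(\<Sum>k<Suc M1. a (k+2) * gg x (k+1)) = (\<Sum>k<M1. a (k+2) * gg x (k+1))"
      using aM[of "M1+2"] by simp
    ultimately show ?thesis by simp
  qed
  have gk: "x * gg x (k+2) = gg x (k+3) + gg x (k+1)" for k
    using gg_rec[of x "k+1"] by (simp add: numeral_2_eq_2 numeral_3_eq_3)
  have "(\<Sum>k<M. a k * (x * gg x k))
      = a 0 * gg x 1 + a 1 * (gg x 2 + 2 * gg x 0)
        + ((\<Sum>k<M1. a (k+2) * gg x (k+3)) + (\<Sum>k<M1. a (k+2) * gg x (k+1)))"
  proof -
    have "(\<Sum>k<M. a k * (x * gg x k)) = a 0 * (x * gg x 0) + a 1 * (x * gg x 1) + (\<Sum>k<M1. a (k+2) * (x * gg x (k+2)))"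
      unfolding M1 sum.lessThan_Suc_shift by (simp add: numeral_2_eq_2 add.assoc)
    also have "(\<Sum>k<M1. a (k+2) * (x * gg x (k+2))) = (\<Sum>k<M1. a (k+2) * gg x (k+3)) + (\<Sum>k<M1. a (k+2) * gg x (k+1))"
      by (simp only: gk distrib_left sum.distrib)
    finally show ?thesis using gg_rec0[of x] gg_rec[of x 0] by (simp add: numeral_2_eq_2)
  qed
  also have "\<dots> = a 0 * gg x 1 + a 1 * gg x 2 + 2 * a 1 * gg x 0 + (\<Sum>k<M1. a (k+2) * gg x (k+3)) + (\<Sum>k<M1. a (k+2) * gg x (k+1))"
  proof -
    have c2: "a 1 * 2 = 2 * a 1" unfolding a_def by (metis of_int_numeral of_int_mult mult.commute)
    have "a 1 * (gg x 2 + 2 * gg x 0) = a 1 * gg x 2 + 2 * a 1 * gg x 0"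
      by (simp only: distrib_left mult.assoc[symmetric] c2)
    then show ?thesis by (simp add: add.assoc)
  qed
  also have "\<dots> = 2 * a 1 * gg x 0 + (a 0 + a 2) * gg x 1 + ((\<Sum>k<M1. a (k+1) * gg x (k+2)) + (\<Sum>k<M1. a (k+3) * gg x (k+2)))"
    using X1 X2 by (simp add: algebra_simps)
  also have "\<dots> = (\<Sum>k<M. b k * gg x k)"
  proof -
    have r1: "(\<Sum>k<M. b k * gg x k) = b 0 * gg x 0 + b 1 * gg x 1 + (\<Sum>k<M1. b (k+2) * gg x (k+2))"
      unfolding M1 sum.lessThan_Suc_shift by (simp add: numeral_2_eq_2 add.assoc)
    have bb: "b (k+2) = a (k+1) + a (k+3)" for k
      using bS[of "k+1"] by (simp add: numeral_2_eq_2 numeral_3_eq_3)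
    have r2: "(\<Sum>k<M1. b (k+2) * gg x (k+2)) = (\<Sum>k<M1. a (k+1) * gg x (k+2)) + (\<Sum>k<M1. a (k+3) * gg x (k+2))"
      by (simp only: bb distrib_right sum.distrib)
    have b1: "b 1 = a 0 + a 2" using bS[of 0] by (simp add: numeral_2_eq_2)
    show ?thesis unfolding r1 r2 b0 b1 by (simp only: add.assoc)
  qed
  finally have "(\<Sum>k<M. a k * (x * gg x k)) = (\<Sum>k<M. of_int (nu (Suc s) k) * gg x k)" by (simp add: b_def)
  then show ?thesis using L by (simp add: a_def)
qed

lemma ext_sum:
  assumes "M \<ge> Suc s"
  shows "(\<Sum>k<M. of_int (nu s k) * h k) = (\<Sum>k<Suc s. of_int (nu s k) * (h k :: 'a::ring_1))"
  using assms
proof (induction M rule: dec_induct)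
  case base then show ?case by simp
next
  case (step m)
  have "nu s m = 0" using step.hyps by (intro nu_zero) simp
  then show ?case using step.IH by (simp only: sum.lessThan_Suc of_int_0 mult_zero_left add_0_right)
qed

lemma pow_sum: "(x::'a::ring_1) ^ s = (\<Sum>k<Suc s. of_int (nu s k) * gg x k)"
proof (induction s)
  case 0 then show ?case by (simp add: nu_top gg_def)
next
  case (Suc s)
  have "x ^ Suc s = x * (\<Sum>k<Suc s. of_int (nu s k) * gg x k)" by (simp only: power_Suc Suc.IH)
  also have "\<dots> = x * (\<Sum>k<s+2. of_int (nu s k) * gg x k)"
    using ext_sum[of s "s+2" "gg x"] by (simp only: le_add_same_cancel1 add_2_eq_Suc' le_Suc_eq le_refl simp_thms)
  also have "\<dots> = (\<Sum>k<s+2. of_int (nu (Suc s) k) * gg x k)"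
    by (rule key_step) simp
  finally show ?case by (simp only: add_2_eq_Suc')
qed

theorem lemma4p5:
  fixes f :: "nat \<Rightarrow> 'a::ring_1"
  assumes "f 0 = 1"
    and "\<And>s. f 1 ^ s = (\<Sum>k=0..s. of_int (nu s k) * f k)"
  shows "\<forall>s\<ge>1. f s = cheb s (f 1)"
proof -
  have all: "f s = gg (f 1) s" for s
  proof (induction s rule: less_induct)
    case (less s)
    have "f 1 ^ s = (\<Sum>k<s. of_int (nu s k) * f k) + f s"
      proof -
      have "{0..s} = {..<Suc s}" by auto
      then show ?thesis using assms(2)[of s]
        by (simp only: sum.lessThan_Suc nu_top of_int_1 mult_1_left)
    qed
    moreover have "f 1 ^ s = (\<Sum>k<s. of_int (nu s k) * gg (f 1) k) + gg (f 1) s"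
      using pow_sum[of "f 1" s] by (simp only: sum.lessThan_Suc nu_top of_int_1 mult_1_left)
    moreover have "(\<Sum>k<s. of_int (nu s k) * f k) = (\<Sum>k<s. of_int (nu s k) * gg (f 1) k)"
    proof (rule sum.cong)
      fix k assume "k \<in> {..<s}"
      then have "f k = gg (f 1) k" using less by simp
      then show "of_int (nu s k) * f k = of_int (nu s k) * gg (f 1) k" by (rule arg_cong)
    qed simp
    ultimately show ?case by simp
  qed
  show ?thesis
  proof (intro allI impI)
    fix s :: nat assume "s \<ge> 1"
    then have "gg (f 1) s = cheb s (f 1)" by (simp add: gg_def)
    then show "f s = cheb s (f 1)" using all[of s] by (rule trans[rotated])
  qed
qed

end
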